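(* Let $H$ be a real Hilbert space, $A:H\to2^H$ a maximal monotone operator with $\mathrm{zer}A\ne\emptyset$, $(\gamma_n)$ a sequence in $(0,\infty)$, $x_0\in H$ and $x_{n+1}=J_{\gamma_nA}x_n$. Then: (i) for all $n\in\mathbb{N}$, $m\ge1$ and $p\in H$, $\|x_{n+m}-p\|\le\|x_n-p\|+\sum_{i=n}^{n+m-1}\|p-J_{\gamma_iA}p\|$; (ii) $(x_n)$ is uniformly Fej\'er monotone w.r.t. $\mathrm{zer}A$ with modulus $\chi(n,m,r)=\max\{n+m-1,m(r+1)\}$, i.e. for all $r,n,m\in\mathbb{N}$ and all $p\in AF_{\chi(n,m,r)}$, $\|x_{n+l}-p\|<\|x_n-p\|+\frac1{r+1}$ for all $l\le m$.
   Context: $J_{\gamma A}:=(Id+\gamma A)^{-1}$ is the resolvent of $\gamma A$ (single-valued, defined on $H$). $AF_k:=\bigcap_{i\le k}\{x\in H\mid\|x-J_{\gamma_iA}x\|\le\frac1{k+1}\}$, so that $\mathrm{zer}A=\bigcap_kAF_k$. *)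

theory Defs
  imports "HOL-Analysis.Analysis"
begin

definition monotone_op :: "('a::real_inner \<Rightarrow> 'a set) \<Rightarrow> bool" where
  "monotone_op A \<longleftrightarrow>
     (\<forall>x y u v. u \<in> A x \<longrightarrow> v \<in> A y \<longrightarrow> 0 \<le> (x - y) \<bullet> (u - v))"

definition maximal_monotone :: "('a::real_inner \<Rightarrow> 'a set) \<Rightarrow> bool" where
  "maximal_monotone A \<longleftrightarrow> monotone_op A \<and>
     (\<forall>B. monotone_op B \<and> (\<forall>x. A x \<subseteq> B x) \<longrightarrow> B = A)"

definition zer :: "('a::real_vector \<Rightarrow> 'a set) \<Rightarrow> 'a set" where
  "zer A = {x. 0 \<in> A x}"

text \<open>Resolvent J_{\<gamma>A} = (Id + \<gamma>A)^{-1}: J_{\<gamma>A} x is the (unique) y with x \<in> y + \<gamma> A y.\<close>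
definition resolvent :: "real \<Rightarrow> ('a::real_vector \<Rightarrow> 'a set) \<Rightarrow> 'a \<Rightarrow> 'a" where
  "resolvent \<gamma> A x = (THE y. \<exists>u \<in> A y. x = y + \<gamma> *\<^sub>R u)"

definition AF :: "(nat \<Rightarrow> real) \<Rightarrow> ('a::real_normed_vector \<Rightarrow> 'a set) \<Rightarrow> nat \<Rightarrow> 'a set" where
  "AF \<gamma> A k = (\<Inter>i\<in>{..k}. {x. norm (x - resolvent (\<gamma> i) A x) \<le> 1 / (real k + 1)})"

definition chi :: "nat \<Rightarrow> nat \<Rightarrow> nat \<Rightarrow> nat" where
  "chi n m r = max (n + m - 1) (m * (r + 1))"

end

theory Submission
  imports Defs
begin

definition hh :: "('a::real_inner \<times> 'a) \<Rightarrow> 'a \<Rightarrow> real" where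
  "hh s y = - inner (fst s - y) (snd s + y)"

definition ca :: "('a::real_inner \<times> 'a) \<Rightarrow> 'a" where
  "ca s = (1/2) *\<^sub>R (fst s - snd s)"

definition cb :: "('a::real_inner \<times> 'a) \<Rightarrow> 'a" where
  "cb s = (1/2) *\<^sub>R (fst s + snd s)"

definition mset_mono :: "('a::real_inner \<times> 'a) set \<Rightarrow> bool" where
  "mset_mono S \<longleftrightarrow> (\<forall>s\<in>S. \<forall>t\<in>S. 0 \<le> inner (fst s - fst t) (snd s - snd t))"

lemma hh_eq: "hh s y = (norm (y - ca s))\<^sup>2 - (norm (cb s))\<^sup>2"
  unfolding hh_def ca_def cb_def power2_norm_eq_inner
  by (simp add: inner_commute algebra_simps)

lemma hh_move: "hh s (y + t *\<^sub>R (p - y)) = hh s y + 2 * t * inner (p - y) (y - ca s) + t\<^sup>2 * (norm (p - y))\<^sup>2"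
  unfolding hh_def ca_def power2_norm_eq_inner
  by (simp add: inner_commute algebra_simps power2_eq_square)

lemma hh_mid: "hh s ((1/2) *\<^sub>R (y + y')) = (hh s y + hh s y')/2 - (norm (y - y'))\<^sup>2 / 4"
  unfolding hh_def power2_norm_eq_inner
  by (simp add: inner_commute algebra_simps) (simp add: field_simps)

lemma hh_expand: "hh s y = - inner (fst s) (snd s) - inner (fst s - snd s) y + inner y y"
  unfolding hh_def
  by (simp add: inner_commute algebra_simps)

lemma continuous_hh: "continuous_on X (\<lambda>y. hh s y)"
  unfolding hh_def by (intro continuous_intros)

lemma avg_ineq:
  fixes P Q :: "'b \<Rightarrow> 'a::real_inner"
  assumes fin: "finite V" and nn: "\<forall>v\<in>V. 0 \<le> \<mu> v" and s1: "sum \<mu> V = 1"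
    and mon: "\<forall>v\<in>V. \<forall>w\<in>V. 0 \<le> inner (P v - P w) (Q v - Q w)"
  shows "inner (\<Sum>v\<in>V. \<mu> v *\<^sub>R P v) (\<Sum>v\<in>V. \<mu> v *\<^sub>R Q v) \<le> (\<Sum>v\<in>V. \<mu> v * inner (P v) (Q v))"
proof -
  have A: "(\<Sum>v\<in>V. \<Sum>w\<in>V. \<mu> v * \<mu> w * inner (P v) (Q v)) = (\<Sum>v\<in>V. \<mu> v * inner (P v) (Q v))"
    by (simp add: sum_distrib_left[symmetric] sum_distrib_right[symmetric] s1 mult.commute mult.left_commute)
  have B: "(\<Sum>v\<in>V. \<Sum>w\<in>V. \<mu> v * \<mu> w * inner (P w) (Q w)) = (\<Sum>v\<in>V. \<mu> v * inner (P v) (Q v))"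
    apply (subst sum.swap)
    by (simp add: sum_distrib_left[symmetric] sum_distrib_right[symmetric] s1 mult.commute mult.left_commute)
  have C: "(\<Sum>v\<in>V. \<Sum>w\<in>V. \<mu> v * \<mu> w * inner (P v) (Q w)) = inner (\<Sum>v\<in>V. \<mu> v *\<^sub>R P v) (\<Sum>v\<in>V. \<mu> v *\<^sub>R Q v)"
    apply (simp add: inner_sum_left inner_sum_right sum_distrib_left mult.assoc)
    apply (subst sum.swap)
    by (simp add: mult.commute mult.left_commute)
  have D: "(\<Sum>v\<in>V. \<Sum>w\<in>V. \<mu> v * \<mu> w * inner (P w) (Q v)) = inner (\<Sum>v\<in>V. \<mu> v *\<^sub>R P v) (\<Sum>v\<in>V. \<mu> v *\<^sub>R Q v)"
    by (simp add: inner_sum_left inner_sum_right sum_distrib_left mult.assoc)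
  have "0 \<le> (\<Sum>v\<in>V. \<Sum>w\<in>V. \<mu> v * \<mu> w * inner (P v - P w) (Q v - Q w))"
    using nn mon by (intro sum_nonneg) auto
  also have "\<dots> = (\<Sum>v\<in>V. \<Sum>w\<in>V. \<mu> v * \<mu> w * inner (P v) (Q v)) + (\<Sum>v\<in>V. \<Sum>w\<in>V. \<mu> v * \<mu> w * inner (P w) (Q w))
      - (\<Sum>v\<in>V. \<Sum>w\<in>V. \<mu> v * \<mu> w * inner (P v) (Q w)) - (\<Sum>v\<in>V. \<Sum>w\<in>V. \<mu> v * \<mu> w * inner (P w) (Q v))"
    by (simp add: inner_diff_left inner_diff_right algebra_simps sum.distrib sum_subtractf)
  finally show ?thesis using A B C D by simp
qed

lemma proj_char:
  fixes y p k :: "'a::real_inner"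
  assumes cv: "convex L" and pL: "p \<in> L" and pmin: "\<forall>k\<in>L. norm (y - p) \<le> norm (y - k)" and kL: "k \<in> L"
  shows "inner (y - p) (k - p) \<le> 0"
proof (rule ccontr)
  assume "\<not> ?thesis"
  hence e: "inner (y - p) (k - p) > 0" by simp
  define e where "e = inner (y - p) (k - p)"
  define n where "n = inner (k - p) (k - p)"
  have npos: "n > 0" unfolding n_def using e by (metis inner_gt_zero_iff inner_zero_right less_irrefl)
  define t where "t = min 1 (e / n)"
  have tpos: "t > 0" using e npos by (simp add: t_def e_def)
  have t1: "t \<le> 1" by (simp add: t_def)
  have tn: "t * n \<le> e" using npos by (simp add: t_def min_def field_simps split: if_splits)
  have qL: "(1 - t) *\<^sub>R p + t *\<^sub>R k \<in> L" using convexD[OF cv pL kL] tpos t1 by simp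
  have "inner (y - ((1 - t) *\<^sub>R p + t *\<^sub>R k)) (y - ((1 - t) *\<^sub>R p + t *\<^sub>R k))
        = inner (y - p) (y - p) - 2 * t * e + t * t * n"
    unfolding e_def n_def by (simp add: algebra_simps inner_commute)
  also have "\<dots> \<le> inner (y - p) (y - p) - t * e"
  proof -
    have "t * (t * n) \<le> t * e" using tn tpos by (intro mult_left_mono) auto
    thus ?thesis by (simp add: algebra_simps)
  qed
  also have "\<dots> < inner (y - p) (y - p)" using tpos e by (simp add: e_def)
  finally have "norm (y - ((1 - t) *\<^sub>R p + t *\<^sub>R k))^2 < norm (y - p)^2"
    by (simp add: power2_norm_eq_inner)
  moreover have "norm (y - p) \<le> norm (y - ((1 - t) *\<^sub>R p + t *\<^sub>R k))" using pmin qL by blast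
  ultimately show False by (smt (verit) norm_ge_zero power_mono)
qed

lemma cont_Max:
  fixes f :: "'c \<Rightarrow> 'b::topological_space \<Rightarrow> real"
  assumes "finite S" "S \<noteq> {}" "\<And>s. s \<in> S \<Longrightarrow> continuous_on K (f s)"
  shows "continuous_on K (\<lambda>y. Max ((\<lambda>s. f s y) ` S))"
  using assms
proof (induction S rule: finite_ne_induct)
  case (singleton x)
  then show ?case by simp
next
  case (insert x F)
  have c1: "continuous_on K (f x)" using insert.prems by auto
  have c2: "continuous_on K (\<lambda>y. Max ((\<lambda>s. f s y) ` F))" using insert.IH insert.prems by auto
  have "continuous_on K (\<lambda>y. max (f x y) (Max ((\<lambda>s. f s y) ` F)))"
    using continuous_on_max[OF c1 c2] by simp
  moreover have "\<And>y. Max ((\<lambda>s. f s y) ` insert x F) = max (f x y) (Max ((\<lambda>s. f s y) ` F))"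
    using insert by (simp add: Max_insert)
  ultimately show ?case by simp
qed

lemma finite_DF:
  fixes S :: "('a::real_inner \<times> 'a) set"
  assumes finS: "finite S" and monS: "mset_mono S"
  shows "\<exists>y. \<forall>s\<in>S. hh s y \<le> 0"
proof (cases "S = {}")
  case True
  then show ?thesis by simp
next
  case False
  define K where "K = convex hull (ca ` S)"
  define g where "g y = Max ((\<lambda>s. hh s y) ` S)" for y
  have Kc: "compact K" by (simp add: K_def finite_imp_compact_convex_hull finS)
  have Kne: "K \<noteq> {}" using False by (simp add: K_def)
  have gc: "continuous_on K g" unfolding g_def
    by (rule cont_Max) (use finS False continuous_hh in auto)
  obtain y where yK: "y \<in> K" and ymin: "\<forall>z\<in>K. g y \<le> g z"
    using continuous_attains_inf[OF Kc Kne gc] by auto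
  define c where "c = g y"
  have hle: "hh s y \<le> c" if "s \<in> S" for s
    unfolding c_def g_def using finS that by (intro Max_ge) auto
  have "c \<le> 0"
  proof (rule ccontr)
    assume "\<not> c \<le> 0"
    hence cpos: "c > 0" by simp
    define I where "I = {s\<in>S. hh s y = c}"
    have "c \<in> (\<lambda>s. hh s y) ` S" unfolding c_def g_def using finS False by (intro Max_in) auto
    hence Ine: "I \<noteq> {}" unfolding I_def by auto
    have finI: "finite I" using finS by (simp add: I_def)
    have IS: "I \<subseteq> S" by (auto simp: I_def)
    have yV: "y \<in> convex hull (ca ` I)"
    proof (rule ccontr)
      assume nyL: "y \<notin> convex hull (ca ` I)"
      define L where "L = convex hull (ca ` I)"
      have Lc: "compact L" by (simp add: L_def finite_imp_compact_convex_hull finI)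
      have Lne: "L \<noteq> {}" using Ine by (simp add: L_def)
      have "continuous_on L (\<lambda>k. norm (y - k))" by (intro continuous_intros)
      then obtain p where pL: "p \<in> L" and pmin: "\<forall>k\<in>L. norm (y - p) \<le> norm (y - k)"
        using continuous_attains_inf[OF Lc Lne] by blast
      have LK: "L \<subseteq> K" unfolding L_def K_def using IS by (intro hull_mono) auto
      have pK: "p \<in> K" using LK pL by auto
      have dpos: "norm (p - y) > 0" using pL nyL L_def by auto
      have act: "hh s (y + t *\<^sub>R (p - y)) < c" if sI: "s \<in> I" and t0: "0 < t" and t1: "t < 1" for s t
      proof -
        have aL: "ca s \<in> L" unfolding L_def using sI by (auto intro: hull_subset[THEN subsetD])
        have pc: "inner (y - p) (ca s - p) \<le> 0"
          by (rule proj_char[OF _ pL pmin aL]) (simp add: L_def)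
        have "inner (p - y) (y - ca s) = - inner (p - y) (p - y) + inner (y - p) (ca s - p)"
          by (simp add: algebra_simps inner_commute)
        hence ip: "inner (p - y) (y - ca s) \<le> - (norm (p - y))\<^sup>2" using pc by (simp add: power2_norm_eq_inner)
        have hs: "hh s y = c" using sI by (simp add: I_def)
        have "hh s (y + t *\<^sub>R (p - y)) \<le> c - 2 * t * (norm (p - y))\<^sup>2 + t\<^sup>2 * (norm (p - y))\<^sup>2"
        proof -
          have "2 * t * inner (p - y) (y - ca s) \<le> 2 * t * (- (norm (p - y))\<^sup>2)"
            using ip t0 by (intro mult_left_mono) auto
          thus ?thesis unfolding hh_move hs by simp
        qed
        also have "\<dots> = c - t * (2 - t) * (norm (p - y))\<^sup>2" by (simp add: algebra_simps power2_eq_square)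
        also have "\<dots> < c" using t0 t1 dpos by simp
        finally show ?thesis .
      qed
      have ev: "eventually (\<lambda>t. \<forall>s\<in>S. hh s (y + t *\<^sub>R (p - y)) < c) (at_right 0)"
      proof (rule eventually_ball_finite[OF finS], rule ballI)
        fix s assume sS: "s \<in> S"
        show "eventually (\<lambda>t. hh s (y + t *\<^sub>R (p - y)) < c) (at_right 0)"
        proof (cases "s \<in> I")
          case True
          show ?thesis by (rule eventually_at_rightI[of 0 1]) (use act True in auto)
        next
          case False
          have lt: "hh s y < c" using hle[OF sS] False sS by (auto simp: I_def)
          have "((\<lambda>t. hh s y + 2 * t * inner (p - y) (y - ca s) + t\<^sup>2 * (norm (p - y))\<^sup>2) \<longlongrightarrow>
                hh s y + 2 * 0 * inner (p - y) (y - ca s) + 0\<^sup>2 * (norm (p - y))\<^sup>2) (at_right 0)"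
            by (intro tendsto_intros)
          hence "((\<lambda>t. hh s (y + t *\<^sub>R (p - y))) \<longlongrightarrow> hh s y) (at_right 0)"
            by (simp add: hh_move)
          from order_tendstoD(2)[OF this lt] show ?thesis .
        qed
      qed
      moreover have "eventually (\<lambda>t. 0 < t \<and> t < 1) (at_right (0::real))"
        by (rule eventually_at_rightI[of 0 1]) auto
      ultimately have "eventually (\<lambda>t. (\<forall>s\<in>S. hh s (y + t *\<^sub>R (p - y)) < c) \<and> 0 < t \<and> t < 1) (at_right (0::real))"
        by (rule eventually_conj)
      then obtain t where tS: "\<forall>s\<in>S. hh s (y + t *\<^sub>R (p - y)) < c" and t0: "0 < t" and t1: "t < 1"
        using eventually_happens'[OF trivial_limit_at_right_real] by blast
      define z where "z = y + t *\<^sub>R (p - y)"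
      have "(1 - t) *\<^sub>R y + t *\<^sub>R p \<in> K"
        using convexD[of K y p "1 - t" t] yK pK t0 t1 by (simp add: K_def)
      moreover have "(1 - t) *\<^sub>R y + t *\<^sub>R p = z" by (simp add: z_def algebra_simps)
      ultimately have zK: "z \<in> K" by simp
      have "g z \<in> (\<lambda>s. hh s z) ` S" unfolding g_def using finS False by (intro Max_in) auto
      then obtain s where "s \<in> S" "g z = hh s z" by auto
      hence "g z < c" using tS by (simp add: z_def)
      thus False using ymin zK unfolding c_def by (metis leD)
    qed
    define V where "V = ca ` I"
    have finV: "finite V" using finI by (simp add: V_def)
    obtain \<mu> where mu0: "\<forall>v\<in>V. 0 \<le> \<mu> v" and mu1: "sum \<mu> V = 1" and muy: "(\<Sum>v\<in>V. \<mu> v *\<^sub>R v) = y"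
      using yV convex_hull_finite[OF finV] V_def by auto
    define \<sigma> where "\<sigma> v = inv_into I ca v" for v
    have \<sigma>I: "\<sigma> v \<in> I" if "v \<in> V" for v using that by (simp add: \<sigma>_def V_def inv_into_into)
    have \<sigma>ca: "ca (\<sigma> v) = v" if "v \<in> V" for v using that by (simp add: \<sigma>_def V_def f_inv_into_f)
    define P where "P v = fst (\<sigma> v)" for v
    define Q where "Q v = snd (\<sigma> v)" for v
    define Pb where "Pb = (\<Sum>v\<in>V. \<mu> v *\<^sub>R P v)"
    define Qb where "Qb = (\<Sum>v\<in>V. \<mu> v *\<^sub>R Q v)"
    have mon: "\<forall>v\<in>V. \<forall>w\<in>V. 0 \<le> inner (P v - P w) (Q v - Q w)"
      using monS \<sigma>I IS unfolding mset_mono_def P_def Q_def by blast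
    have avg: "inner Pb Qb \<le> (\<Sum>v\<in>V. \<mu> v * inner (P v) (Q v))"
      unfolding Pb_def Qb_def by (rule avg_ineq[OF finV mu0 mu1 mon])
    have "y = (\<Sum>v\<in>V. \<mu> v *\<^sub>R ca (\<sigma> v))" using muy \<sigma>ca by simp
    also have "\<dots> = (\<Sum>v\<in>V. (1/2) *\<^sub>R (\<mu> v *\<^sub>R P v - \<mu> v *\<^sub>R Q v))"
      by (simp add: ca_def P_def Q_def algebra_simps)
    also have "\<dots> = (1/2) *\<^sub>R (Pb - Qb)"
      by (simp add: Pb_def Qb_def scaleR_sum_right[symmetric] sum_subtractf)
    finally have yeq: "y = (1/2) *\<^sub>R (Pb - Qb)" .
    have "(\<Sum>v\<in>V. \<mu> v * hh (\<sigma> v) y) = (\<Sum>v\<in>V. \<mu> v * c)"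
      using \<sigma>I by (intro sum.cong) (auto simp: I_def)
    also have "\<dots> = c" using mu1 by (simp add: sum_distrib_right[symmetric])
    finally have cs: "c = (\<Sum>v\<in>V. \<mu> v * hh (\<sigma> v) y)" by simp
    also have "\<dots> = (\<Sum>v\<in>V. - (\<mu> v * inner (P v) (Q v)) - inner (\<mu> v *\<^sub>R P v - \<mu> v *\<^sub>R Q v) y + \<mu> v * inner y y)"
      by (intro sum.cong) (auto simp: hh_expand P_def Q_def algebra_simps)
    also have "\<dots> = - (\<Sum>v\<in>V. \<mu> v * inner (P v) (Q v)) - inner (Pb - Qb) y + inner y y"
      using mu1 by (simp add: sum_subtractf sum.distrib inner_sum_left sum_distrib_right[symmetric] Pb_def Qb_def sum_negf inner_diff_left)
    also have "\<dots> \<le> - inner Pb Qb - inner (Pb - Qb) y + inner y y" using avg by simp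
    also have "\<dots> = - inner ((1/2) *\<^sub>R (Pb + Qb)) ((1/2) *\<^sub>R (Pb + Qb))"
      unfolding yeq by (simp add: algebra_simps inner_commute)
    also have "\<dots> \<le> 0" by simp
    finally show False using cpos by simp
  qed
  then show ?thesis using hle by (meson order_trans)
qed

lemma sqbound:
  assumes "(norm v)\<^sup>2 \<le> 8 / (real k + 1)" "N \<le> k" "8 / (real N + 1) < e\<^sup>2" "0 < e"
  shows "norm v < e"
proof -
  have "8 / (real k + 1) \<le> 8 / (real N + 1)" using assms(2) by (intro divide_left_mono) auto
  hence "(norm v)\<^sup>2 < e\<^sup>2" using assms by linarith
  thus ?thesis by (rule power_less_imp_less_base) (use assms(4) in auto)
qed

lemma archN:
  assumes "(0::real) < e"
  shows "\<exists>N. 8 / (real N + 1) < e\<^sup>2"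
proof -
  have e2: "e\<^sup>2 > 0" using assms by simp
  obtain N where N: "8 / e\<^sup>2 < real N" using reals_Archimedean2 by blast
  have "8 < e\<^sup>2 * real N" using N e2 by (simp add: field_simps)
  hence "8 < e\<^sup>2 * (real N + 1)" using e2 by (smt (verit) mult_pos_pos distrib_left)
  hence "8 / (real N + 1) < e\<^sup>2" by (simp add: field_simps)
  thus ?thesis by blast
qed

lemma inf_DF:
  fixes G :: "('a::{real_inner,complete_space} \<times> 'a) set"
  assumes monG: "mset_mono G"
  shows "\<exists>y. \<forall>s\<in>G. hh s y \<le> 0"
proof (cases "G = {}")
  case True
  then show ?thesis by simp
next
  case False
  then obtain s0 where s0G: "s0 \<in> G" by auto
  define D :: "('a \<times> 'a) set \<Rightarrow> 'a set" where "D F = {y. \<forall>s\<in>F. hh s y \<le> 0}" for F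
  define R where "R = norm (ca s0) + norm (cb s0)"
  have Dne: "D F \<noteq> {}" if "finite F" "F \<subseteq> G" for F
  proof -
    have "mset_mono F" using monG that unfolding mset_mono_def by blast
    from finite_DF[OF that(1) this] show ?thesis by (auto simp: D_def)
  qed
  have Dmid: "(1/2) *\<^sub>R (y + y') \<in> D F" if "y \<in> D F" "y' \<in> D F" for F y y'
  proof -
    { fix s assume sF: "s \<in> F"
      have "hh s y \<le> 0" "hh s y' \<le> 0" using that sF by (auto simp: D_def)
      hence "hh s ((1/2) *\<^sub>R (y + y')) \<le> 0" unfolding hh_mid
      proof -
        have "(hh s y + hh s y')/2 \<le> 0" using \<open>hh s y \<le> 0\<close> \<open>hh s y' \<le> 0\<close> by simp
        moreover have "(norm (y - y'))\<^sup>2 / 4 \<ge> 0" by simp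
        ultimately show "(hh s y + hh s y') / 2 - (norm (y - y'))\<^sup>2 / 4 \<le> 0" by linarith
      qed }
    thus ?thesis by (auto simp: D_def)
  qed
  have Danti: "D F' \<subseteq> D F" if "F \<subseteq> F'" for F F' using that by (auto simp: D_def)
  have Dbound: "norm y \<le> R" if "y \<in> D F" "s0 \<in> F" for y F
  proof -
    have "hh s0 y \<le> 0" using that by (auto simp: D_def)
    hence "(norm (y - ca s0))\<^sup>2 \<le> (norm (cb s0))\<^sup>2" unfolding hh_eq by simp
    hence "norm (y - ca s0) \<le> norm (cb s0)" by (rule power2_le_imp_le) simp
    moreover have "norm y \<le> norm (y - ca s0) + norm (ca s0)" by (metis norm_triangle_sub add.commute)
    ultimately show ?thesis unfolding R_def by simp
  qed
  define m :: "('a \<times> 'a) set \<Rightarrow> real" where "m F = Inf ((\<lambda>y. (norm y)\<^sup>2) ` D F)" for F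
  have bb: "bdd_below ((\<lambda>y. (norm y)\<^sup>2) ` D F)" for F by (rule bdd_belowI[of _ 0]) auto
  have mlow: "m F \<le> (norm y)\<^sup>2" if "y \<in> D F" for F y
    unfolding m_def using that bb by (intro cInf_lower) auto
  have mless: "\<exists>y\<in>D F. (norm y)\<^sup>2 < m F + \<epsilon>" if "finite F" "F \<subseteq> G" "\<epsilon> > 0" for F \<epsilon>
  proof -
    have "m F < m F + \<epsilon>" using that by simp
    hence "Inf ((\<lambda>y. (norm y)\<^sup>2) ` D F) < m F + \<epsilon>" by (simp add: m_def)
    then show ?thesis using cInf_less_iff[of "(\<lambda>y. (norm y)\<^sup>2) ` D F"] Dne[OF that(1,2)] bb by auto
  qed
  have mmono: "m F \<le> m F'" if "finite F'" "F' \<subseteq> G" "F \<subseteq> F'" for F F'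
    unfolding m_def using Dne[OF that(1,2)] bb Danti[OF that(3)] by (intro cInf_superset_mono) auto
  have mbound: "m F \<le> R\<^sup>2" if "finite F" "F \<subseteq> G" for F
  proof -
    have f2: "finite (insert s0 F)" "insert s0 F \<subseteq> G" using that s0G by auto
    obtain y where y: "y \<in> D (insert s0 F)" using Dne[OF f2] by auto
    have "m F \<le> m (insert s0 F)" using mmono[OF f2] by auto
    also have "\<dots> \<le> (norm y)\<^sup>2" using mlow y by auto
    also have "\<dots> \<le> R\<^sup>2" using Dbound[OF y] by (intro power_mono) auto
    finally show ?thesis .
  qed
  define Ms where "Ms = m ` {F. finite F \<and> F \<subseteq> G}"
  define M where "M = Sup Ms"
  have Msne: "Ms \<noteq> {}" unfolding Ms_def by auto
  have ba: "bdd_above Ms" unfolding Ms_def using mbound by (intro bdd_aboveI[of _ "R\<^sup>2"]) auto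
  have mM: "m F \<le> M" if "finite F" "F \<subseteq> G" for F
    unfolding M_def using that ba by (intro cSup_upper) (auto simp: Ms_def)
  have exF: "\<exists>F. finite F \<and> F \<subseteq> G \<and> M - \<epsilon> < m F" if "\<epsilon> > 0" for \<epsilon>
  proof -
    have "M - \<epsilon> < Sup Ms" using that by (simp add: M_def)
    then show ?thesis using less_cSup_iff[OF Msne ba] by (auto simp: Ms_def)
  qed
  have keydist: "(norm (y - y'))\<^sup>2 \<le> 2 * (norm y)\<^sup>2 + 2 * (norm y')\<^sup>2 - 4 * m F"
    if "y \<in> D F" "y' \<in> D F" for F y y'
  proof -
    have "m F \<le> (norm ((1/2) *\<^sub>R (y + y')))\<^sup>2" by (rule mlow[OF Dmid[OF that]])
    moreover have "(norm (y - y'))\<^sup>2 = 2 * (norm y)\<^sup>2 + 2 * (norm y')\<^sup>2 - 4 * (norm ((1/2) *\<^sub>R (y + y')))\<^sup>2"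
      unfolding power2_norm_eq_inner by (simp add: algebra_simps inner_commute)
    ultimately show ?thesis by linarith
  qed
  define ep where "ep k = 1 / (real k + 1)" for k :: nat
  have ep_pos: "ep k > 0" for k by (simp add: ep_def)
  have "\<forall>k. \<exists>F. finite F \<and> F \<subseteq> G \<and> M - ep k < m F" using exF ep_pos by blast
  from choice[OF this] obtain Fs where Fs0: "\<forall>k. finite (Fs k) \<and> Fs k \<subseteq> G \<and> M - ep k < m (Fs k)" by blast
  hence Fs: "\<And>k. finite (Fs k) \<and> Fs k \<subseteq> G \<and> M - ep k < m (Fs k)" by blast
  define U where "U k = (\<Union>i\<le>k. Fs i)" for k
  have Ufin: "finite (U k)" "U k \<subseteq> G" for k using Fs by (auto simp: U_def)
  have Umono: "U k \<subseteq> U j" if "k \<le> j" for k j using that unfolding U_def by (intro UN_mono) auto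
  have mU: "M - ep k < m (U k)" for k
  proof -
    have "Fs k \<subseteq> U k" by (auto simp: U_def)
    hence "m (Fs k) \<le> m (U k)" using mmono[OF Ufin(1) Ufin(2)] by blast
    thus ?thesis using Fs[of k] by linarith
  qed
  have "\<forall>k. \<exists>y. y \<in> D (U k) \<and> (norm y)\<^sup>2 < m (U k) + ep k" using mless[OF Ufin ep_pos] by blast
  from choice[OF this] obtain ys where ys0: "\<forall>k. ys k \<in> D (U k) \<and> (norm (ys k))\<^sup>2 < m (U k) + ep k" by blast
  hence ys: "\<And>k. ys k \<in> D (U k) \<and> (norm (ys k))\<^sup>2 < m (U k) + ep k" by blast
  have epmono: "ep j \<le> ep k" if "k \<le> j" for k j using that unfolding ep_def by (intro divide_left_mono) auto
  have eq8: "8 / (real k + 1) = 8 * ep k" for k by (simp add: ep_def)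
  have close: "(norm (z - ys k))\<^sup>2 \<le> 8 / (real k + 1)"
    if "z \<in> D (U k)" "(norm z)\<^sup>2 \<le> M + ep k" for z k
  proof -
    have "(norm (z - ys k))\<^sup>2 \<le> 2 * (norm z)\<^sup>2 + 2 * (norm (ys k))\<^sup>2 - 4 * m (U k)"
    proof -
      have "ys k \<in> D (U k)" using ys[of k] by blast
      from keydist[OF that(1) this] show ?thesis .
    qed
    moreover have "(norm (ys k))\<^sup>2 < M + ep k" using ys[of k] mM[OF Ufin(1) Ufin(2), of k] by linarith
    ultimately show ?thesis using that(2) mU[of k] unfolding eq8 by linarith
  qed
  have cl: "(norm (ys j - ys k))\<^sup>2 \<le> 8 / (real k + 1)" if "k \<le> j" for j k
  proof (rule close)
    show "ys j \<in> D (U k)" using ys[of j] Danti[OF Umono[OF that]] by auto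
    show "(norm (ys j))\<^sup>2 \<le> M + ep k" using ys[of j] mM[OF Ufin, of j] epmono[OF that] by linarith
  qed
  have "Cauchy ys"
    unfolding Cauchy_def
  proof (intro allI impI)
    fix e :: real assume e: "e > 0"
    obtain N where N: "8 / (real N + 1) < e\<^sup>2" using archN[OF e] by blast
    show "\<exists>M. \<forall>m\<ge>M. \<forall>n\<ge>M. dist (ys m) (ys n) < e"
    proof (intro exI allI impI)
      fix a b assume a: "N \<le> a" and b: "N \<le> b"
      show "dist (ys a) (ys b) < e"
      proof (cases "a \<le> b")
        case True
        have "norm (ys b - ys a) < e" using sqbound[OF cl[OF True] a N e] .
        thus ?thesis by (simp add: dist_norm norm_minus_commute)
      next
        case False
        hence "b \<le> a" by simp
        have "norm (ys a - ys b) < e" using sqbound[OF cl[OF \<open>b \<le> a\<close>] b N e] .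
        thus ?thesis by (simp add: dist_norm)
      qed
    qed
  qed
  then obtain ystar where ylim: "ys \<longlonglongrightarrow> ystar" using Cauchy_convergent_iff convergent_def by blast
  show ?thesis
  proof (intro exI ballI)
    fix s assume sG: "s \<in> G"
    have fin2: "finite (insert s (U k))" "insert s (U k) \<subseteq> G" for k using Ufin sG by auto
    have "\<forall>k. \<exists>z. z \<in> D (insert s (U k)) \<and> (norm z)\<^sup>2 < m (insert s (U k)) + ep k"
      using mless[OF fin2 ep_pos] by blast
    from choice[OF this] obtain zs where zs0: "\<forall>k. zs k \<in> D (insert s (U k)) \<and> (norm (zs k))\<^sup>2 < m (insert s (U k)) + ep k" by blast
    hence zs: "\<And>k. zs k \<in> D (insert s (U k)) \<and> (norm (zs k))\<^sup>2 < m (insert s (U k)) + ep k" by blast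
    have zcl: "(norm (zs k - ys k))\<^sup>2 \<le> 8 / (real k + 1)" for k
    proof (rule close)
      show "zs k \<in> D (U k)" using zs[of k] Danti[of "U k" "insert s (U k)"] by auto
      show "(norm (zs k))\<^sup>2 \<le> M + ep k" using zs[of k] mM[OF fin2, of k] by linarith
    qed
    have "(\<lambda>k. zs k - ys k) \<longlonglongrightarrow> 0"
    proof (rule LIMSEQ_I)
      fix e :: real assume e: "0 < e"
      obtain N where N: "8 / (real N + 1) < e\<^sup>2" using archN[OF e] by blast
      show "\<exists>no. \<forall>n\<ge>no. norm (zs n - ys n - 0) < e"
      proof (intro exI allI impI)
        fix n assume "N \<le> n"
        from sqbound[OF zcl[of n] this N e] show "norm (zs n - ys n - 0) < e" by simp
      qed
    qed
    hence "(\<lambda>k. (zs k - ys k) + ys k) \<longlonglongrightarrow> 0 + ystar" using ylim by (intro tendsto_add)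
    hence zlim: "zs \<longlonglongrightarrow> ystar" by simp
    have "(\<lambda>k. hh s (zs k)) \<longlonglongrightarrow> hh s ystar"
      unfolding hh_def using zlim by (intro tendsto_intros)
    moreover have "\<forall>k. hh s (zs k) \<le> 0" using zs by (auto simp: D_def)
    ultimately show "hh s ystar \<le> 0" by (intro LIMSEQ_le_const2) auto
  qed
qed

lemma minty:
  fixes A :: "'a::{real_inner,complete_space} \<Rightarrow> 'a set"
  assumes mm: "maximal_monotone A" and g: "\<gamma> > 0"
  shows "\<exists>y. \<exists>u\<in>A y. z = y + \<gamma> *\<^sub>R u"
proof -
  have monA: "monotone_op A" using mm by (simp add: maximal_monotone_def)
  define G where "G = {(x, \<gamma> *\<^sub>R u - z) | x u. u \<in> A x}"
  have "mset_mono G"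
    unfolding mset_mono_def G_def
  proof (clarsimp)
    fix x1 u1 x2 u2 assume "u1 \<in> A x1" "u2 \<in> A x2"
    hence "0 \<le> inner (x1 - x2) (u1 - u2)" using monA by (simp add: monotone_op_def)
    hence "0 \<le> \<gamma> * inner (x1 - x2) (u1 - u2)" using g by simp
    thus "0 \<le> inner (x1 - x2) (\<gamma> *\<^sub>R u1 - \<gamma> *\<^sub>R u2)" by (simp add: scaleR_diff_right[symmetric])
  qed
  from inf_DF[OF this] obtain y where y: "\<forall>s\<in>G. hh s y \<le> 0" by blast
  define v where "v = (1/\<gamma>) *\<^sub>R (z - y)"
  have key: "0 \<le> inner (x - y) (u - v)" if "u \<in> A x" for x u
  proof -
    have "(x, \<gamma> *\<^sub>R u - z) \<in> G" using that by (auto simp: G_def)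
    hence "0 \<le> inner (x - y) (\<gamma> *\<^sub>R u - z + y)" using y by (force simp: hh_def)
    moreover have "\<gamma> *\<^sub>R u - z + y = \<gamma> *\<^sub>R (u - v)" using g by (simp add: v_def algebra_simps)
    ultimately have "0 \<le> \<gamma> * inner (x - y) (u - v)" by simp
    thus ?thesis using g by (simp add: zero_le_mult_iff)
  qed
  define B where "B w = (if w = y then insert v (A y) else A w)" for w
  have monB: "monotone_op B"
    unfolding monotone_op_def
  proof (intro allI impI)
    fix x1 x2 u1 u2 assume u1: "u1 \<in> B x1" and u2: "u2 \<in> B x2"
    show "0 \<le> inner (x1 - x2) (u1 - u2)"
    proof (cases "x1 = y \<and> u1 = v")
      case True
      show ?thesis
      proof (cases "x2 = y \<and> u2 = v")
        case True
        with \<open>x1 = y \<and> u1 = v\<close> show ?thesis by simp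
      next
        case False
        hence "u2 \<in> A x2" using u2 by (auto simp: B_def split: if_splits)
        from key[OF this] have "0 \<le> inner (x2 - y) (u2 - v)" .
        moreover have "inner (x2 - y) (u2 - v) = inner (y - x2) (v - u2)"
          by (simp add: algebra_simps)
        ultimately show ?thesis using True by simp
      qed
    next
      case False
      hence u1A: "u1 \<in> A x1" using u1 by (auto simp: B_def split: if_splits)
      show ?thesis
      proof (cases "x2 = y \<and> u2 = v")
        case True
        with key[OF u1A] show ?thesis by simp
      next
        case False
        hence "u2 \<in> A x2" using u2 by (auto simp: B_def split: if_splits)
        with u1A monA show ?thesis by (simp add: monotone_op_def)
      qed
    qed
  qed
  have "\<forall>x. A x \<subseteq> B x" by (auto simp: B_def)
  hence "B = A" using mm monB by (simp add: maximal_monotone_def)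
  hence "v \<in> A y" by (metis B_def insertI1)
  moreover have "z = y + \<gamma> *\<^sub>R v" using g by (simp add: v_def)
  ultimately show ?thesis by blast
qed

lemma resolvent_eq:
  assumes monA: "monotone_op A" and g: "\<gamma> > 0" and u: "u \<in> A y" and x: "x = y + \<gamma> *\<^sub>R u"
  shows "resolvent \<gamma> A x = y"
  unfolding resolvent_def
proof (rule the_equality)
  show "\<exists>u\<in>A y. x = y + \<gamma> *\<^sub>R u" using u x by blast
next
  fix y' assume "\<exists>u\<in>A y'. x = y' + \<gamma> *\<^sub>R u"
  then obtain u' where u': "u' \<in> A y'" and x': "x = y' + \<gamma> *\<^sub>R u'" by blast
  have m: "0 \<le> inner (y - y') (u - u')" using monA u u' by (simp add: monotone_op_def)
  have "\<gamma> *\<^sub>R (u - u') = y' - y" using x x' by (simp add: algebra_simps)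
  hence "\<gamma> * inner (y - y') (u - u') = inner (y - y') (y' - y)" by (metis inner_scaleR_right)
  also have "\<dots> = - inner (y - y') (y - y')" by (metis inner_minus_right minus_diff_eq)
  finally have "inner (y - y') (y - y') \<le> 0" using m g by (smt (verit) mult_nonneg_nonneg)
  hence "inner (y - y') (y - y') = 0" using inner_ge_zero[of "y - y'"] by linarith
  thus "y' = y" by simp
qed

lemma resolvent_spec:
  fixes A :: "'a::{real_inner,complete_space} \<Rightarrow> 'a set"
  assumes mm: "maximal_monotone A" and g: "\<gamma> > 0"
  shows "\<exists>u\<in>A (resolvent \<gamma> A x). x = resolvent \<gamma> A x + \<gamma> *\<^sub>R u"
proof -
  obtain y u where u: "u \<in> A y" and x: "x = y + \<gamma> *\<^sub>R u" using minty[OF mm g] by blast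
  have monA: "monotone_op A" using mm by (simp add: maximal_monotone_def)
  have r: "resolvent \<gamma> A x = y" using resolvent_eq[OF monA g u x] .
  show ?thesis unfolding r using u x by blast
qed

lemma resolvent_nonexp:
  fixes A :: "'a::{real_inner,complete_space} \<Rightarrow> 'a set"
  assumes mm: "maximal_monotone A" and g: "\<gamma> > 0"
  shows "norm (resolvent \<gamma> A x - resolvent \<gamma> A p) \<le> norm (x - p)"
proof -
  define y1 where "y1 = resolvent \<gamma> A x"
  define y2 where "y2 = resolvent \<gamma> A p"
  obtain u1 where u1: "u1 \<in> A y1" "x = y1 + \<gamma> *\<^sub>R u1" using resolvent_spec[OF mm g] y1_def by blast
  obtain u2 where u2: "u2 \<in> A y2" "p = y2 + \<gamma> *\<^sub>R u2" using resolvent_spec[OF mm g] y2_def by blast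
  have monA: "monotone_op A" using mm by (simp add: maximal_monotone_def)
  have m: "0 \<le> inner (y1 - y2) (u1 - u2)" using monA u1 u2 by (simp add: monotone_op_def)
  have "\<gamma> *\<^sub>R (u1 - u2) = (x - p) - (y1 - y2)" using u1 u2 by (simp add: algebra_simps)
  hence "\<gamma> * inner (y1 - y2) (u1 - u2) = inner (y1 - y2) (x - p) - inner (y1 - y2) (y1 - y2)"
    by (metis inner_scaleR_right inner_diff_right)
  hence "inner (y1 - y2) (y1 - y2) \<le> inner (y1 - y2) (x - p)" using m g by (smt (verit) mult_nonneg_nonneg)
  also have "\<dots> \<le> norm (y1 - y2) * norm (x - p)" by (rule norm_cauchy_schwarz)
  finally have "norm (y1 - y2) * norm (y1 - y2) \<le> norm (y1 - y2) * norm (x - p)"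
    by (simp add: power2_norm_eq_inner[symmetric] power2_eq_square)
  hence "norm (y1 - y2) \<le> norm (x - p)"
    by (cases "norm (y1 - y2) = 0") (auto simp: mult_le_cancel_left)
  thus ?thesis by (simp add: y1_def y2_def)
qed

theorem lemma8p1:
  fixes A :: "'a::{real_inner, complete_space} \<Rightarrow> 'a set"
    and \<gamma> :: "nat \<Rightarrow> real" and x :: "nat \<Rightarrow> 'a" and x0 :: 'a
  assumes "maximal_monotone A"
    and "zer A \<noteq> {}"
    and "\<And>n. \<gamma> n > 0"
    and "x 0 = x0"
    and "\<And>n. x (Suc n) = resolvent (\<gamma> n) A (x n)"
  shows "(\<forall>n m p. m \<ge> 1 \<longrightarrow>
            norm (x (n + m) - p) \<le> norm (x n - p) + (\<Sum>i = n..n + m - 1. norm (p - resolvent (\<gamma> i) A p)))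
       \<and> (\<forall>r n m. \<forall>p \<in> AF \<gamma> A (chi n m r). \<forall>l \<le> m.
            norm (x (n + l) - p) < norm (x n - p) + 1 / (real r + 1))"
proof -
  have P1: "norm (x (n + m) - p) \<le> norm (x n - p) + (\<Sum>i = n..<n + m. norm (p - resolvent (\<gamma> i) A p))" for n m p
  proof (induction m)
    case 0
    then show ?case by simp
  next
    case (Suc m)
    have "x (n + Suc m) = resolvent (\<gamma> (n + m)) A (x (n + m))" using assms(5) by simp
    hence "norm (x (n + Suc m) - p) \<le> norm (resolvent (\<gamma> (n + m)) A (x (n + m)) - resolvent (\<gamma> (n + m)) A p)
            + norm (p - resolvent (\<gamma> (n + m)) A p)"
      using norm_triangle_ineq[of "resolvent (\<gamma> (n + m)) A (x (n + m)) - resolvent (\<gamma> (n + m)) A p"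
          "resolvent (\<gamma> (n + m)) A p - p"]
      by (simp add: norm_minus_commute[of "resolvent (\<gamma> (n + m)) A p" p])
    also have "\<dots> \<le> norm (x (n + m) - p) + norm (p - resolvent (\<gamma> (n + m)) A p)"
      using resolvent_nonexp[OF assms(1) assms(3)] by simp
    also have "\<dots> \<le> norm (x n - p) + (\<Sum>i = n..<n + m. norm (p - resolvent (\<gamma> i) A p)) + norm (p - resolvent (\<gamma> (n + m)) A p)"
      using Suc.IH by simp
    also have "\<dots> = norm (x n - p) + (\<Sum>i = n..<n + Suc m. norm (p - resolvent (\<gamma> i) A p))"
      by simp
    finally show ?case .
  qed
  show ?thesis
  proof (intro conjI allI impI ballI)
    fix n m :: nat and p :: 'a assume m1: "m \<ge> 1"
    have "{n..n + m - 1} = {n..<n + m}" using m1 by auto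
    thus "norm (x (n + m) - p) \<le> norm (x n - p) + (\<Sum>i = n..n + m - 1. norm (p - resolvent (\<gamma> i) A p))"
      using P1 by simp
  next
    fix r n m l :: nat and p :: 'a
    assume pAF: "p \<in> AF \<gamma> A (chi n m r)" and lm: "l \<le> m"
    define k where "k = chi n m r"
    have rpos: "0 < 1 / (real r + 1)" by simp
    show "norm (x (n + l) - p) < norm (x n - p) + 1 / (real r + 1)"
    proof (cases "l = 0")
      case True
      then show ?thesis using rpos by simp
    next
      case False
      have bnd: "norm (p - resolvent (\<gamma> i) A p) \<le> 1 / (real k + 1)" if "i \<in> {n..<n + l}" for i
      proof -
        have "i \<le> k" using that lm unfolding k_def chi_def by auto
        thus ?thesis using pAF unfolding AF_def k_def by auto
      qed
      have "(\<Sum>i = n..<n + l. norm (p - resolvent (\<gamma> i) A p)) \<le> real (card {n..<n + l}) * (1 / (real k + 1))"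
        by (rule sum_bounded_above) (use bnd in auto)
      also have "\<dots> = real l / (real k + 1)" by simp
      also have "\<dots> < 1 / (real r + 1)"
      proof -
        have "l * (r + 1) \<le> m * (r + 1)" using lm by (rule mult_le_mono1)
        also have "\<dots> \<le> k" unfolding k_def chi_def by simp
        finally have lk: "l * (r + 1) \<le> k" .
        have "real (l * (r + 1)) \<le> real k" using lk by (simp only: of_nat_le_iff)
        hence "real l * (real r + 1) \<le> real k" by (simp add: algebra_simps)
        hence "real l * (real r + 1) < real k + 1" by linarith
        thus ?thesis by (simp add: field_simps)
      qed
      finally have "(\<Sum>i = n..<n + l. norm (p - resolvent (\<gamma> i) A p)) < 1 / (real r + 1)" .
      thus ?thesis using P1[of n l p] by simp
    qed
  qed
qed

end
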